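(* Let $a<b$ and let $X$ be a random variable taking values in $[a,b]$, with probability density function $f:[a,b]\rightarrow[0,1]$ and cumulative distribution function $F(x)=\Pr(X\le x)=\int_a^x f(t)\,dt$. Assume that $F$ is differentiable in $(a,b)$ with $F'=f\in L^1[a,b]$ and that $\gamma\le f(t)\le\Gamma$ for all $t\in[a,b]$, where $\gamma,\Gamma$ are real constants. Then \[ \left|\frac{1}{2}\left[F\left(\frac{3a+b}{4}\right)+F\left(\frac{a+3b}{4}\right)\right]-\frac{b-E(X)}{b-a}\right|\leq \frac{b-a}{4} \left(\frac{1}{b-a}-\gamma\right) \] and \[ \left|\frac{1}{2}\left[F\left(\frac{3a+b}{4}\right)+F\left(\frac{a+3b}{4}\right)\right]-\frac{b-E(X)}{b-a}\right|\leq \frac{b-a}{4} \left(\Gamma-\frac{1}{b-a}\right), \] where $E(X)$ is the expectation of $X$. *)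

theory Defs
  imports "HOL-Probability.Probability"
begin

definition CDF :: "'a measure \<Rightarrow> ('a \<Rightarrow> real) \<Rightarrow> real \<Rightarrow> real" where
  "CDF M X x = measure M {\<omega> \<in> space M. X \<omega> \<le> x}"

end

theory Submission imports Defs begin

lemma piece:
  fixes g :: "real \<Rightarrow> real"
  assumes "x \<le> y" "continuous_on {x..y} g" "\<And>s t. x\<le>s \<Longrightarrow> s\<le>t \<Longrightarrow> t\<le>y \<Longrightarrow> g s \<le> g t"
  shows "(y-x)*g x \<le> integral {x..y} g \<and> integral {x..y} g \<le> (y-x)*g y"
proof -
  have i: "g integrable_on {x..y}" using assms(2) integrable_continuous_real by blast
  have "integral {x..y} (\<lambda>_. g x) \<le> integral {x..y} g"
    by (rule integral_le) (use i assms in auto)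
  moreover have "integral {x..y} g \<le> integral {x..y} (\<lambda>_. g y)"
    by (rule integral_le) (use i assms in auto)
  ultimately show ?thesis using assms(1) by simp
qed

lemma key:
  fixes g :: "real \<Rightarrow> real"
  assumes ab: "a<b" and cont: "continuous_on {a..b} g"
    and mono: "\<And>x y. a\<le>x \<Longrightarrow> x\<le>y \<Longrightarrow> y\<le>b \<Longrightarrow> g x \<le> g y"
  shows "\<bar>(b-a)/2*(g((3*a+b)/4)+g((a+3*b)/4)) - integral {a..b} g\<bar> \<le> (b-a)/4*(g b - g a)"
proof -
  define c where "c = (3*a+b)/4"
  define m where "m = (a+b)/2"
  define d where "d = (a+3*b)/4"
  have o: "a \<le> c" "c \<le> m" "m \<le> d" "d \<le> b" using ab unfolding c_def m_def d_def by (auto simp: divide_simps)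
  have P: "(y-x)*g x \<le> integral {x..y} g \<and> integral {x..y} g \<le> (y-x)*g y"
    if "a \<le> x" "x \<le> y" "y \<le> b" for x y
    by (rule piece) (use that mono in \<open>auto intro: continuous_on_subset[OF cont]\<close>)
  have I: "g integrable_on {x..y}" if "a \<le> x" "y \<le> b" for x y
    using integrable_continuous_real continuous_on_subset[OF cont] that by (metis atLeastatMost_subset_iff order_refl)
  have "integral {a..b} g = integral {a..m} g + integral {m..b} g"
    using Henstock_Kurzweil_Integration.integral_combine[OF _ _ I[of a b]] o by simp
  also have "integral {a..m} g = integral {a..c} g + integral {c..m} g"
    using Henstock_Kurzweil_Integration.integral_combine[OF _ _ I[of a m]] o by simp
  also have "integral {m..b} g = integral {m..d} g + integral {d..b} g"
    using Henstock_Kurzweil_Integration.integral_combine[OF _ _ I[of m b]] o by simp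
  finally have S: "integral {a..b} g = integral {a..c} g + integral {c..m} g + (integral {m..d} g + integral {d..b} g)" .
  have 1: "(c-a)*g a \<le> integral {a..c} g \<and> integral {a..c} g \<le> (c-a)*g c" using P o by auto
  have 2: "(m-c)*g c \<le> integral {c..m} g \<and> integral {c..m} g \<le> (m-c)*g m" using P o by auto
  have 3: "(d-m)*g m \<le> integral {m..d} g \<and> integral {m..d} g \<le> (d-m)*g d" using P o by auto
  have 4: "(b-d)*g d \<le> integral {d..b} g \<and> integral {d..b} g \<le> (b-d)*g b" using P o by auto
  define h where "h = (b-a)/4"
  have e: "c-a = h" "m-c = h" "d-m = h" "b-d = h"
    unfolding c_def m_def d_def h_def by (auto simp: divide_simps)
  have gm: "g a \<le> g c" "g c \<le> g m" "g m \<le> g d" "g d \<le> g b" using mono o by auto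
  have hp: "0 \<le> h" using ab h_def by simp
  have A: "h * g m \<le> h * g d" "h * g c \<le> h * g m"
    using mult_left_mono[OF _ hp] gm by auto
  have B: "(b-a)/2*(g c + g d) = 2*(h*g c) + 2*(h*g d)" "(b-a)/4*(g b - g a) = h*g b - h*g a"
    unfolding h_def by (auto simp: field_simps)
  show ?thesis unfolding c_def[symmetric] d_def[symmetric] B abs_le_iff
    using S 1 2 3 4 A unfolding e by linarith
qed

theorem corollary4p1:
  fixes M :: "'a measure" and X :: "'a \<Rightarrow> real" and f :: "real \<Rightarrow> real"
    and a b \<gamma> \<Gamma> :: real
  assumes "prob_space M"
    and "a < b"
    and "X \<in> borel_measurable M"
    and "\<forall>\<omega>\<in>space M. X \<omega> \<in> {a..b}"
    and "distributed M lborel X (\<lambda>x. ennreal (indicator {a..b} x * f x))"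
    and "\<forall>t\<in>{a..b}. f t \<in> {0..1}"
    and "\<forall>x\<in>{a..b}. CDF M X x = integral {a..x} f"
    and "\<forall>x\<in>{a<..<b}. (CDF M X has_real_derivative f x) (at x)"
    and "f integrable_on {a..b}"
    and "\<forall>t\<in>{a..b}. \<gamma> \<le> f t \<and> f t \<le> \<Gamma>"
  shows "\<bar>(CDF M X ((3*a+b)/4) + CDF M X ((a+3*b)/4)) / 2 - (b - (\<integral>\<omega>. X \<omega> \<partial>M)) / (b-a)\<bar>
           \<le> (b-a)/4 * (1/(b-a) - \<gamma>)
     \<and> \<bar>(CDF M X ((3*a+b)/4) + CDF M X ((a+3*b)/4)) / 2 - (b - (\<integral>\<omega>. X \<omega> \<partial>M)) / (b-a)\<bar>
           \<le> (b-a)/4 * (\<Gamma> - 1/(b-a))"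
proof -
  note ps = assms(1) and ab = assms(2) and Xm = assms(3) and Xr = assms(4) and dist = assms(5)
    and f01 = assms(6) and Fint = assms(7) and Fder = assms(8) and fint = assms(9) and bnd = assms(10)
  define F where "F = CDF M X"
  have Fi: "F x = integral {a..x} f" if "x \<in> {a..b}" for x using Fint that F_def by auto
  have contF: "continuous_on {a..b} F"
    using continuous_on_cong[THEN iffD2, OF refl _ indefinite_integral_continuous_1[OF fint]] Fi by blast
  have Fa: "F a = 0" using Fi[of a] ab by simp
  have Fb: "F b = 1"
  proof -
    have "{\<omega> \<in> space M. X \<omega> \<le> b} = space M" using Xr by auto
    then show ?thesis unfolding F_def CDF_def using prob_space.prob_space[OF ps] by simp
  qed
  have Fdiff: "F y - F x = integral {x..y} f" if "a \<le> x" "x \<le> y" "y \<le> b" for x y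
  proof -
    have "integral {a..x} f + integral {x..y} f = integral {a..y} f"
      by (rule Henstock_Kurzweil_Integration.integral_combine)
        (use that in \<open>auto intro: integrable_on_subinterval[OF fint]\<close>)
    then show ?thesis using Fi that by auto
  qed
  have fbd: "\<gamma>*(y-x) \<le> integral {x..y} f \<and> integral {x..y} f \<le> \<Gamma>*(y-x)"
    if "a \<le> x" "x \<le> y" "y \<le> b" for x y
  proof -
    have fi: "f integrable_on {x..y}" using that by (auto intro: integrable_on_subinterval[OF fint])
    have "integral {x..y} (\<lambda>_. \<gamma>) \<le> integral {x..y} f"
      by (rule integral_le) (use fi bnd that in auto)
    moreover have "integral {x..y} f \<le> integral {x..y} (\<lambda>_. \<Gamma>)"
      by (rule integral_le) (use fi bnd that in auto)
    ultimately show ?thesis using that by (simp add: mult.commute)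
  qed
  have mono1: "F x - \<gamma>*x \<le> F y - \<gamma>*y" if "a \<le> x" "x \<le> y" "y \<le> b" for x y
    using Fdiff[OF that] fbd[OF that] by (simp add: algebra_simps)
  have mono2: "\<Gamma>*x - F x \<le> \<Gamma>*y - F y" if "a \<le> x" "x \<le> y" "y \<le> b" for x y
    using Fdiff[OF that] fbd[OF that] by (simp add: algebra_simps)
  define I where "I = integral {a..b} F"
  have Fint_on: "F integrable_on {a..b}" using contF integrable_continuous_real by blast
  have idint: "(\<lambda>t. t) integrable_on {a..b}" by (intro integrable_continuous_real continuous_intros)
  have gi: "integral {a..b} (\<lambda>t. K*t) = K*((b\<^sup>2 - a\<^sup>2)/2)" for K
    using integral_mult[OF idint, of K] ab by simp
  have gii: "(\<lambda>t. K*t) integrable_on {a..b}" for K using integrable_on_mult_right[OF idint] by blast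
  have gi: "integral {a..b} (\<lambda>t. K*t) = K*((b\<^sup>2 - a\<^sup>2)/2)" for K
    using integral_mult[OF idint, of K] ab by simp
  have gii: "(\<lambda>t. K*t) integrable_on {a..b}" for K using integrable_on_mult_right[OF idint] by blast
  define c where "c = (3*a+b)/4"
  define d where "d = (a+3*b)/4"
  have lin: "(b-a)/2*(c + d) = (b\<^sup>2 - a\<^sup>2)/2" unfolding c_def d_def by (simp add: power2_eq_square field_simps)
  have K1: "\<bar>(b-a)/2*(F c + F d) - I\<bar> \<le> (b-a)/4*(1 - \<gamma>*(b-a))"
  proof -
    have k: "\<bar>(b-a)/2*((F c - \<gamma>*c) + (F d - \<gamma>*d)) - integral {a..b} (\<lambda>t. F t - \<gamma>*t)\<bar>
       \<le> (b-a)/4*((F b - \<gamma>*b) - (F a - \<gamma>*a))"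
      unfolding c_def d_def
      by (rule key[OF ab]) (auto intro!: continuous_intros contF mono1 mono2)
    have ie: "integral {a..b} (\<lambda>t. F t - \<gamma>*t) = I - \<gamma>*((b\<^sup>2 - a\<^sup>2)/2)"
      unfolding I_def using Fint_on gii gi by (simp add: integral_diff)
    have e1: "(b-a)/2*((F c - \<gamma>*c) + (F d - \<gamma>*d)) = (b-a)/2*(F c+F d) - \<gamma>*((b-a)/2*(c+d))"
      by (simp add: algebra_simps)
    have e2: "(b-a)/4*((F b - \<gamma>*b) - (F a - \<gamma>*a)) = (b-a)/4*(1 - \<gamma>*(b-a))"
      using Fa Fb by (simp add: algebra_simps)
    have X: "(b-a)/2*((F c - \<gamma>*c) + (F d - \<gamma>*d)) - integral {a..b} (\<lambda>t. F t - \<gamma>*t)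
       = (b-a)/2*(F c + F d) - I" unfolding ie using e1 unfolding lin by linarith
    show ?thesis using k unfolding X e2 .
  qed
  have K2: "\<bar>(b-a)/2*(F c + F d) - I\<bar> \<le> (b-a)/4*(\<Gamma>*(b-a) - 1)"
  proof -
    have k: "\<bar>(b-a)/2*((\<Gamma>*c - F c) + (\<Gamma>*d - F d)) - integral {a..b} (\<lambda>t. \<Gamma>*t - F t)\<bar>
       \<le> (b-a)/4*((\<Gamma>*b - F b) - (\<Gamma>*a - F a))"
      unfolding c_def d_def
      by (rule key[OF ab]) (auto intro!: continuous_intros contF mono1 mono2)
    have ie: "integral {a..b} (\<lambda>t. \<Gamma>*t - F t) = \<Gamma>*((b\<^sup>2 - a\<^sup>2)/2) - I"
      unfolding I_def using Fint_on gii gi by (simp add: integral_diff)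
    have e1: "(b-a)/2*((\<Gamma>*c - F c) + (\<Gamma>*d - F d)) = \<Gamma>*((b-a)/2*(c+d)) - (b-a)/2*(F c+F d)"
      by (simp add: algebra_simps)
    have e2: "(b-a)/4*((\<Gamma>*b - F b) - (\<Gamma>*a - F a)) = (b-a)/4*(\<Gamma>*(b-a) - 1)"
      using Fa Fb by (simp add: algebra_simps)
    have X: "(b-a)/2*((\<Gamma>*c - F c) + (\<Gamma>*d - F d)) - integral {a..b} (\<lambda>t. \<Gamma>*t - F t)
       = -((b-a)/2*(F c + F d) - I)" unfolding ie using e1 unfolding lin by linarith
    show ?thesis using k unfolding X e2 abs_minus_cancel .
  qed
  have E: "(\<integral>\<omega>. X \<omega> \<partial>M) = b - I"
  proof -
    interpret prob_space M by (rule ps)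
    have intX: "integrable M X"
      by (rule integrable_const_bound[where B="max \<bar>a\<bar> \<bar>b\<bar>"]) (use Xr Xm in \<open>auto intro!: AE_I2\<close>)
    define \<delta> where "\<delta> x = indicator {a..b} x * f x" for x
    have dist': "distributed M lborel X (\<lambda>x. ennreal (\<delta> x))" using dist unfolding \<delta>_def .
    have nn: "0 \<le> \<delta> x" for x using f01 unfolding \<delta>_def indicator_def by auto
    have il: "integrable lborel (\<lambda>x. \<delta> x * x)"
      using distributed_integrable[OF dist', of "\<lambda>x. x"] intX nn by simp
    have ev: "(\<integral>x. \<delta> x * x \<partial>lborel) = (\<integral>\<omega>. X \<omega> \<partial>M)"
      using distributed_integral[OF dist', of "\<lambda>x. x"] nn by simp
    have re: "(\<lambda>x. \<delta> x * x) = (\<lambda>x. if x\<in>{a..b} then f x * x else 0)"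
      by (auto simp: \<delta>_def indicator_def)
    have E1: "integral {a..b} (\<lambda>x. f x * x) = (\<integral>\<omega>. X \<omega> \<partial>M)"
      using integral_lborel[OF il] ev unfolding re integral_restrict_UNIV by simp
    have der: "((\<lambda>t. t * F t) has_vector_derivative (F t + t * f t)) (at t)" if "t \<in> {a<..<b}" for t
    proof -
      have "(F has_real_derivative f t) (at t)" using Fder that F_def by auto
      then have "((\<lambda>t. t * F t) has_real_derivative (t * f t + 1 * F t)) (at t)"
        by (rule DERIV_mult'[OF DERIV_ident])
      then show ?thesis by (simp add: has_real_derivative_iff_has_vector_derivative add.commute)
    qed
    have ftc: "((\<lambda>t. F t + t * f t) has_integral (b * F b - a * F a)) {a..b}"
      by (rule fundamental_theorem_of_calculus_interior[OF less_imp_le[OF ab] _ der])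
         (intro continuous_intros contF)
    have "((\<lambda>t. (F t + t * f t) - F t) has_integral (b * F b - a * F a - I)) {a..b}"
      by (rule has_integral_diff[OF ftc]) (use Fint_on I_def in \<open>simp add: has_integral_integral\<close>)
    then have "((\<lambda>t. f t * t) has_integral (b - I)) {a..b}" using Fa Fb by (simp add: mult.commute)
    then show ?thesis using E1 integral_unique by metis
  qed
  have eq: "(b - (\<integral>\<omega>. X \<omega> \<partial>M)) / (b-a) = I/(b-a)" using E by simp
  have r: "\<bar>(F c + F d)/2 - I/(b-a)\<bar> = \<bar>(b-a)/2*(F c + F d) - I\<bar> / (b-a)"
    using ab by (simp add: field_simps)
  have R1: "(b-a)/4*(1/(b-a) - \<gamma>) = ((b-a)/4*(1 - \<gamma>*(b-a)))/(b-a)" using ab by (simp add: field_simps)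
  have R2: "(b-a)/4*(\<Gamma> - 1/(b-a)) = ((b-a)/4*(\<Gamma>*(b-a) - 1))/(b-a)" using ab by (simp add: field_simps)
  have p: "0 \<le> b - a" using ab by simp
  show ?thesis unfolding eq F_def[symmetric] c_def[symmetric] d_def[symmetric] r R1 R2
    using divide_right_mono[OF K1 p] divide_right_mono[OF K2 p] by simp
qed
end
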